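(* In any tree $T=(V,E)$, the quantity $$\Lambda_1=\sum_{\{st,uv\}\in Q}\big(a_{su}(k_t+k_v)+a_{sv}(k_t+k_u)+a_{tu}(k_s+k_v)+a_{tv}(k_s+k_u)\big)$$ satisfies $$\Lambda_1=\sum_{st\in E}\Big((k_t-1)(\xi(s)-k_t)+(k_s-1)(\xi(t)-k_s)\Big).$$
   Context: $a_{ij}$ adjacency entries, $k_x$ degree, $\xi(s)=\sum_{t\in\Gamma(s)}k_t$ with $\Gamma(s)$ the neighbourhood of $s$. $Q$ is the set of unordered pairs $\{st,uv\}$ of edges with $s,t,u,v$ pairwise distinct. *)

theory Defs
  imports Main
begin

definition simple_graph :: "'a set \<Rightarrow> 'a set set \<Rightarrow> bool" where
  "simple_graph V E \<longleftrightarrow> finite V \<and>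
     (\<forall>e\<in>E. \<exists>x y. x \<in> V \<and> y \<in> V \<and> x \<noteq> y \<and> e = {x, y})"

definition is_walk :: "'a set set \<Rightarrow> 'a list \<Rightarrow> bool" where
  "is_walk E xs \<longleftrightarrow> xs \<noteq> [] \<and> (\<forall>i. i + 1 < length xs \<longrightarrow> {xs ! i, xs ! (i + 1)} \<in> E)"

definition connected_graph :: "'a set \<Rightarrow> 'a set set \<Rightarrow> bool" where
  "connected_graph V E \<longleftrightarrow>
     (\<forall>x\<in>V. \<forall>y\<in>V. \<exists>xs. is_walk E xs \<and> hd xs = x \<and> last xs = y)"

definition has_cycle :: "'a set set \<Rightarrow> bool" where
  "has_cycle E \<longleftrightarrow>
     (\<exists>xs. 3 \<le> length xs \<and> distinct xs \<and> is_walk E xs \<and> {last xs, hd xs} \<in> E)"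

definition is_tree :: "'a set \<Rightarrow> 'a set set \<Rightarrow> bool" where
  "is_tree V E \<longleftrightarrow> simple_graph V E \<and> V \<noteq> {} \<and> connected_graph V E \<and> \<not> has_cycle E"

definition adj :: "'a set set \<Rightarrow> 'a \<Rightarrow> 'a \<Rightarrow> int" where
  "adj E x y = (if {x, y} \<in> E then 1 else 0)"

definition neighbours :: "'a set \<Rightarrow> 'a set set \<Rightarrow> 'a \<Rightarrow> 'a set" where
  "neighbours V E s = {t \<in> V. {s, t} \<in> E}"

definition deg :: "'a set \<Rightarrow> 'a set set \<Rightarrow> 'a \<Rightarrow> int" where
  "deg V E x = int (card (neighbours V E x))"

definition xi :: "'a set \<Rightarrow> 'a set set \<Rightarrow> 'a \<Rightarrow> int" where
  "xi V E s = (\<Sum>t\<in>neighbours V E s. deg V E t)"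

definition Qpairs :: "'a set set \<Rightarrow> 'a set set set" where
  "Qpairs E = {{{s, t}, {u, v}} | s t u v. {s, t} \<in> E \<and> {u, v} \<in> E \<and> distinct [s, t, u, v]}"

text \<open>Lambda_1: for each element of Q a labelling s,t,u,v is chosen; the summand
does not depend on the choice.\<close>

definition Lambda1 :: "'a set \<Rightarrow> 'a set set \<Rightarrow> int" where
  "Lambda1 V E = (\<Sum>p\<in>Qpairs E.
     (\<lambda>(s, t, u, v).
        adj E s u * (deg V E t + deg V E v) + adj E s v * (deg V E t + deg V E u)
      + adj E t u * (deg V E s + deg V E v) + adj E t v * (deg V E s + deg V E u))
     (SOME (s, t, u, v). p = {{s, t}, {u, v}} \<and> distinct [s, t, u, v]))"

end

theory Submission imports Defs begin

lemma adj_sym: "adj E x y = adj E y x"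
  by (simp add: adj_def insert_commute)

definition GG :: "'a set \<Rightarrow> 'a set set \<Rightarrow> 'a \<times> 'a \<times> 'a \<times> 'a \<Rightarrow> int" where
  "GG V E = (\<lambda>(s, t, u, v).
        adj E s u * (deg V E t + deg V E v) + adj E s v * (deg V E t + deg V E u)
      + adj E t u * (deg V E s + deg V E v) + adj E t v * (deg V E s + deg V E u))"

lemma Lambda1_GG: "Lambda1 V E = (\<Sum>p\<in>Qpairs E. GG V E
     (SOME (s, t, u, v). p = {{s, t}, {u, v}} \<and> distinct [s, t, u, v]))"
  unfolding Lambda1_def GG_def by simp

lemma reindex_inv:
  assumes "\<And>x. x \<in> S \<Longrightarrow> \<sigma> x \<in> S" "\<And>x. \<sigma> (\<sigma> x) = x"
  shows "(\<Sum>x\<in>S. f (\<sigma> x)) = (\<Sum>x\<in>S. (f x :: int))"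
  by (rule sum.reindex_bij_witness[where i=\<sigma> and j=\<sigma>]) (auto simp: assms)

locale tg =
  fixes V :: "'a set" and E :: "'a set set"
  assumes finV: "finite V"
    and edge: "{x, y} \<in> E \<Longrightarrow> x \<in> V \<and> y \<in> V \<and> x \<noteq> y"
    and Eform: "e \<in> E \<Longrightarrow> \<exists>x y. x \<noteq> y \<and> e = {x, y}"
    and tri: "{a, b} \<in> E \<Longrightarrow> {b, c} \<in> E \<Longrightarrow> {c, a} \<in> E \<Longrightarrow> False"
begin

definition D :: "('a \<times> 'a) set" where "D = {(s, t). {s, t} \<in> E}"
definition D4 :: "('a \<times> 'a \<times> 'a \<times> 'a) set" where
  "D4 = {(s, t, u, v). {s, t} \<in> E \<and> {u, v} \<in> E \<and> distinct [s, t, u, v]}"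

lemma finD: "finite D"
proof -
  have "D \<subseteq> V \<times> V" unfolding D_def using edge by auto
  thus ?thesis using finV finite_subset by blast
qed

lemma finD4: "finite D4"
proof -
  have "D4 \<subseteq> V \<times> V \<times> V \<times> V" unfolding D4_def using edge by auto
  thus ?thesis using finV finite_subset by blast
qed

lemma finE: "finite E"
proof -
  have "E \<subseteq> Pow V" using Eform edge by fastforce
  thus ?thesis using finV finite_subset by blast
qed

lemma Q_img: "Qpairs E = (\<lambda>(s, t, u, v). {{s, t}, {u, v}}) ` D4"
  unfolding Qpairs_def D4_def by (auto simp: image_def)

lemma dbl4:
  assumes h: "{{s, t}, {u, v}} = {{a, b}, {c, d}}"
  shows "(s,t,u,v) \<in> {(a,b,c,d),(b,a,c,d),(a,b,d,c),(b,a,d,c),(c,d,a,b),(d,c,a,b),(c,d,b,a),(d,c,b,a)}"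
proof -
  have "({s,t}={a,b} \<and> {u,v}={c,d}) \<or> ({s,t}={c,d} \<and> {u,v}={a,b})"
    using h by (rule iffD1[OF doubleton_eq_iff])
  then show ?thesis
  proof (elim disjE conjE)
    assume "{s,t}={a,b}" "{u,v}={c,d}"
    then have "(s=a\<and>t=b)\<or>(s=b\<and>t=a)" "(u=c\<and>v=d)\<or>(u=d\<and>v=c)"
      by (simp_all only: doubleton_eq_iff)
    then show ?thesis by auto
  next
    assume "{s,t}={c,d}" "{u,v}={a,b}"
    then have "(s=c\<and>t=d)\<or>(s=d\<and>t=c)" "(u=a\<and>v=b)\<or>(u=b\<and>v=a)"
      by (simp_all only: doubleton_eq_iff)
    then show ?thesis by auto
  qed
qed

lemma fiber8:
  assumes "distinct [a, b, c, d]" 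
  shows "{x \<in> D4. (\<lambda>(s, t, u, v). {{s, t}, {u, v}}) x = {{a, b}, {c, d}}} \<subseteq>
    {(a,b,c,d),(b,a,c,d),(a,b,d,c),(b,a,d,c),(c,d,a,b),(d,c,a,b),(c,d,b,a),(d,c,b,a)}"
proof
  fix x assume x: "x \<in> {x \<in> D4. (\<lambda>(s, t, u, v). {{s, t}, {u, v}}) x = {{a, b}, {c, d}}}"
  obtain s t u v where xs: "x = (s,t,u,v)" by (cases x) auto
  have "{{s, t}, {u, v}} = {{a, b}, {c, d}}" using x unfolding xs by simp
  then show "x \<in> {(a,b,c,d),(b,a,c,d),(a,b,d,c),(b,a,d,c),(c,d,a,b),(d,c,a,b),(c,d,b,a),(d,c,b,a)}"
    unfolding xs by (rule dbl4)
qed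

lemma GG_inv:
  "GG V E (t,s,u,v) = GG V E (s,t,u,v)" "GG V E (s,t,v,u) = GG V E (s,t,u,v)"
  "GG V E (u,v,s,t) = GG V E (s,t,u,v)"
  by (simp_all add: GG_def adj_sym algebra_simps)

lemma GG_eq: "x \<in> {(a,b,c,d),(b,a,c,d),(a,b,d,c),(b,a,d,c),(c,d,a,b),(d,c,a,b),(c,d,b,a),(d,c,b,a)}
  \<Longrightarrow> GG V E x = GG V E (a,b,c,d)"
  by (auto simp: GG_def adj_sym algebra_simps)

lemma fiber_sum:
  assumes "q \<in> Qpairs E"
  shows "(\<Sum>x\<in>{x \<in> D4. (\<lambda>(s, t, u, v). {{s, t}, {u, v}}) x = q}. GG V E x)
     = 8 * GG V E (SOME (s, t, u, v). q = {{s, t}, {u, v}} \<and> distinct [s, t, u, v])"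
proof -
  obtain a b c d where abcd: "(a,b,c,d) \<in> D4" "q = {{a, b}, {c, d}}"
    using assms unfolding Q_img by auto
  have dis: "distinct [a,b,c,d]" using abcd unfolding D4_def by auto
  let ?F = "{x \<in> D4. (\<lambda>(s, t, u, v). {{s, t}, {u, v}}) x = q}"
  let ?F8 = "{(a,b,c,d),(b,a,c,d),(a,b,d,c),(b,a,d,c),(c,d,a,b),(d,c,a,b),(c,d,b,a),(d,c,b,a)}"
  have "?F8 \<subseteq> ?F" using abcd dis unfolding D4_def by (auto simp: insert_commute)
  moreover have "?F \<subseteq> ?F8" using fiber8[OF dis] unfolding abcd(2) .
  ultimately have F: "?F = ?F8" by (rule equalityI[rotated])
  have c8: "card ?F8 = 8" using dis by simp
  have const: "GG V E x = GG V E (a,b,c,d)" if "x \<in> ?F8" for x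
    using that by (rule GG_eq)
  define P where "P = (\<lambda>(s, t, u, v). q = {{s, t}, {u, v}} \<and> distinct [s, t, u, v])"
  have "P (a,b,c,d)" using abcd dis unfolding P_def by simp
  hence "P (SOME x. P x)" by (rule someI)
  moreover obtain s t u v where stuv: "(SOME x. P x) = (s,t,u,v)" by (metis prod_cases4)
  ultimately have "q = {{s, t}, {u, v}}" "distinct [s, t, u, v]" unfolding P_def by auto
  moreover have qE: "q \<subseteq> E" using abcd unfolding D4_def by auto
  ultimately have "(s,t,u,v) \<in> ?F" unfolding D4_def by auto
  hence m: "(s,t,u,v) \<in> ?F8" unfolding F .
  have "GG V E (SOME x. P x) = GG V E (a,b,c,d)" unfolding stuv by (rule const[OF m])
  moreover have "(\<Sum>x\<in>?F. GG V E x) = 8 * GG V E (a,b,c,d)"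
  proof -
    have "(\<Sum>x\<in>?F. GG V E x) = (\<Sum>x\<in>?F8. GG V E (a,b,c,d))"
      unfolding F by (rule sum.cong[OF refl const])
    also have "\<dots> = of_nat (card ?F8) * GG V E (a,b,c,d)" by (rule sum_constant)
    finally show ?thesis unfolding c8 by simp
  qed
  ultimately show ?thesis unfolding P_def by simp
qed

lemma partA: "8 * Lambda1 V E = (\<Sum>x\<in>D4. GG V E x)"
proof -
  have "(\<Sum>x\<in>D4. GG V E x) = (\<Sum>q\<in>Qpairs E. \<Sum>x\<in>{x \<in> D4. (\<lambda>(s, t, u, v). {{s, t}, {u, v}}) x = q}. GG V E x)"
    by (rule sum.group[symmetric]) (auto simp: finD4 Q_img)
  also have "\<dots> = (\<Sum>q\<in>Qpairs E. 8 * GG V E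
     (SOME (s, t, u, v). q = {{s, t}, {u, v}} \<and> distinct [s, t, u, v]))"
    by (rule sum.cong[OF refl fiber_sum])
  finally show ?thesis unfolding Lambda1_GG by (simp add: sum_distrib_left)
qed


definition H1 :: "'a \<times> 'a \<times> 'a \<times> 'a \<Rightarrow> int" where
  "H1 = (\<lambda>(s, t, u, v). adj E s u * (deg V E t + deg V E v))"
definition H :: "'a \<times> 'a \<times> 'a \<times> 'a \<Rightarrow> int" where
  "H = (\<lambda>(s, t, u, v). adj E s u * deg V E v)"

lemma partB: "(\<Sum>x\<in>D4. GG V E x) = 8 * (\<Sum>x\<in>D4. H x)"
proof -
  define s1 where "s1 = (\<lambda>(s::'a, t::'a, u::'a, v::'a). (s, t, v, u))"
  define s2 where "s2 = (\<lambda>(s::'a, t::'a, u::'a, v::'a). (t, s, u, v))"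
  define s3 where "s3 = (\<lambda>(s::'a, t::'a, u::'a, v::'a). (t, s, v, u))"
  define s4 where "s4 = (\<lambda>(s::'a, t::'a, u::'a, v::'a). (u, v, s, t))"
  have "(\<Sum>x\<in>D4. GG V E x) = (\<Sum>x\<in>D4. H1 x + H1 (s1 x) + H1 (s2 x) + H1 (s3 x))"
  proof (rule sum.cong[OF refl])
    fix x :: "'a \<times> 'a \<times> 'a \<times> 'a"
    obtain s t u v where xs: "x = (s,t,u,v)" by (cases x) auto
    show "GG V E x = H1 x + H1 (s1 x) + H1 (s2 x) + H1 (s3 x)"
      unfolding xs by (simp add: GG_def H1_def s1_def s2_def s3_def)
  qed
  also have "\<dots> = (\<Sum>x\<in>D4. H1 x) + (\<Sum>x\<in>D4. H1 (s1 x)) + (\<Sum>x\<in>D4. H1 (s2 x)) + (\<Sum>x\<in>D4. H1 (s3 x))"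
    by (simp add: sum.distrib)
  also have "(\<Sum>x\<in>D4. H1 (s1 x)) = (\<Sum>x\<in>D4. H1 x)"
    by (rule reindex_inv) (auto simp: s1_def D4_def insert_commute)
  also have "(\<Sum>x\<in>D4. H1 (s2 x)) = (\<Sum>x\<in>D4. H1 x)"
    by (rule reindex_inv) (auto simp: s2_def D4_def insert_commute)
  also have "(\<Sum>x\<in>D4. H1 (s3 x)) = (\<Sum>x\<in>D4. H1 x)"
    by (rule reindex_inv) (auto simp: s3_def D4_def insert_commute)
  also have "(\<Sum>x\<in>D4. H1 x) = (\<Sum>x\<in>D4. H x) + (\<Sum>x\<in>D4. H (s4 x))"
  proof -
    have "(\<Sum>x\<in>D4. H1 x) = (\<Sum>x\<in>D4. H x + H (s4 x))"
    proof (rule sum.cong[OF refl])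
      fix x :: "'a \<times> 'a \<times> 'a \<times> 'a"
      obtain s t u v where xs: "x = (s,t,u,v)" by (cases x) auto
      show "H1 x = H x + H (s4 x)"
        unfolding xs by (simp add: H1_def H_def s4_def algebra_simps adj_sym[of E u s])
    qed
    thus ?thesis by (simp add: sum.distrib)
  qed
  also have "(\<Sum>x\<in>D4. H (s4 x)) = (\<Sum>x\<in>D4. H x)"
    by (rule reindex_inv) (auto simp: s4_def D4_def)
  finally show ?thesis by simp
qed

definition hh :: "'a \<times> 'a \<Rightarrow> int" where
  "hh = (\<lambda>(s, t). (deg V E s - 1) * (xi V E t - deg V E s))"

abbreviation N where "N \<equiv> neighbours V E"

lemma finN: "finite (N s)"
  unfolding neighbours_def using finV by simp

lemma memN: "t \<in> N s \<longleftrightarrow> {s, t} \<in> E"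
  unfolding neighbours_def using edge by auto

lemma partC: "(\<Sum>x\<in>D4. H x) = (\<Sum>p\<in>D. hh p)"
proof -
  define D4' where "D4' = {(s, t, u, v). {s, t} \<in> E \<and> {u, v} \<in> E \<and> {s, u} \<in> E \<and> distinct [s, t, u, v]}"
  define K where "K = (\<lambda>(s::'a, t::'a, u::'a, v::'a). deg V E v)"
  define B where "B = (\<lambda>(s, u). (N s - {u}) \<times> (N u - {s}))"
  have sub: "D4' \<subseteq> D4" unfolding D4'_def D4_def by auto
  have "(\<Sum>x\<in>D4. H x) = (\<Sum>x\<in>D4. if x \<in> D4' then K x else 0)"
  proof (rule sum.cong[OF refl])
    fix x assume "x \<in> D4"
    obtain s t u v where xs: "x = (s,t,u,v)" by (cases x) auto
    show "H x = (if x \<in> D4' then K x else 0)"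
      using \<open>x \<in> D4\<close> unfolding xs by (simp add: H_def K_def D4'_def D4_def adj_def)
  qed
  also have "\<dots> = (\<Sum>x\<in>D4 \<inter> D4'. K x)" by (rule sum.inter_restrict[symmetric, OF finD4])
  also have "D4 \<inter> D4' = D4'" using sub by blast
  also have "(\<Sum>x\<in>D4'. K x) = (\<Sum>p\<in>Sigma D B. deg V E (snd (snd p)))"
  proof (rule sum.reindex_bij_witness[where i="\<lambda>((s, u), (t, v)). (s, t, u, v)"
        and j="\<lambda>(s, t, u, v). ((s, u), (t, v))"])
    fix a assume "a \<in> D4'"
    then obtain s t u v where a: "a = (s,t,u,v)" "{s, t} \<in> E" "{u, v} \<in> E" "{s, u} \<in> E"
        "distinct [s, t, u, v]" unfolding D4'_def by auto
    show "(case case a of (s, t, u, v) \<Rightarrow> ((s, u), t, v) of (x, xa) \<Rightarrow> (case x of (s, u) \<Rightarrow> \<lambda>(t, v). (s, t, u, v)) xa) = a"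
      unfolding a by simp
    show "(case a of (s, t, u, v) \<Rightarrow> ((s, u), t, v)) \<in> Sigma D B"
      using a by (auto simp: D_def B_def memN insert_commute)
    show "deg V E (snd (snd (case a of (s, t, u, v) \<Rightarrow> ((s, u), t, v)))) = K a"
      unfolding a K_def by simp
  next
    fix b assume "b \<in> Sigma D B"
    obtain s u t v where b0: "b = ((s,u),(t,v))" by (metis prod.exhaust)
    have b: "b = ((s,u),(t,v))" "{s, u} \<in> E" "{s, t} \<in> E" "t \<noteq> u"
        "{u, v} \<in> E" "v \<noteq> s" using \<open>b \<in> Sigma D B\<close> unfolding b0 D_def B_def by (auto simp: memN)
    have "t \<noteq> v"
    proof
      assume "t = v"
      thus False using tri[of s t u] b by (auto simp: insert_commute)
    qed
    moreover have "s \<noteq> t" "s \<noteq> u" "u \<noteq> v" using b edge by blast+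
    ultimately show "(case case b of (x, xa) \<Rightarrow> (case x of (s, u) \<Rightarrow> \<lambda>(t, v). (s, t, u, v)) xa of (s, t, u, v) \<Rightarrow> ((s, u), t, v)) = b"
      "(case b of (x, xa) \<Rightarrow> (case x of (s, u) \<Rightarrow> \<lambda>(t, v). (s, t, u, v)) xa) \<in> D4'"
      using b unfolding D4'_def by auto
  qed
  also have "\<dots> = (\<Sum>p\<in>D. \<Sum>y\<in>B p. deg V E (snd y))"
  proof -
    have "(\<Sum>p\<in>D. \<Sum>y\<in>B p. deg V E (snd y)) = (\<Sum>(x, y)\<in>Sigma D B. deg V E (snd y))"
      by (rule sum.Sigma) (auto simp: finD B_def finN split: prod.splits)
    thus ?thesis by (simp add: split_def)
  qed
  also have "\<dots> = (\<Sum>p\<in>D. hh p)"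
  proof (rule sum.cong[OF refl])
    fix p assume "p \<in> D"
    then obtain s u where p: "p = (s,u)" "{s,u} \<in> E" unfolding D_def by auto
    have us: "u \<in> N s" "s \<in> N u" using p memN by (auto simp: insert_commute)
    have "(\<Sum>y\<in>B p. deg V E (snd y)) = (\<Sum>t\<in>N s - {u}. \<Sum>v\<in>N u - {s}. deg V E v)"
    proof -
      have "(\<Sum>t\<in>N s - {u}. \<Sum>v\<in>N u - {s}. deg V E v) = (\<Sum>(t, v)\<in>(N s - {u}) \<times> (N u - {s}). deg V E v)"
        by (rule sum.cartesian_product)
      thus ?thesis unfolding p B_def by (simp only: split_def prod.case fst_conv snd_conv)
    qed
    also have "\<dots> = of_nat (card (N s - {u})) * (\<Sum>v\<in>N u - {s}. deg V E v)"
      by (rule sum_constant)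
    also have "card (N s - {u}) = card (N s) - 1" using us finN by simp
    also have "(\<Sum>v\<in>N u - {s}. deg V E v) = xi V E u - deg V E s"
      using us finN unfolding xi_def by (simp add: sum_diff1)
    also have "int (card (N s) - 1) = deg V E s - 1"
    proof -
      have "card (N s) > 0" using us(1) finN[of s] card_gt_0_iff by blast
      thus ?thesis unfolding deg_def by (simp add: of_nat_diff)
    qed
    finally show "(\<Sum>y\<in>B p. deg V E (snd y)) = hh p" unfolding hh_def p by simp
  qed
  finally show ?thesis .
qed

definition ff :: "'a \<times> 'a \<Rightarrow> int" where
  "ff = (\<lambda>(s, t). (deg V E t - 1) * (xi V E s - deg V E t)
                          + (deg V E s - 1) * (xi V E t - deg V E s))"

lemma partD: "2 * (\<Sum>e\<in>E. ff (SOME (s, t). e = {s, t})) = 2 * (\<Sum>p\<in>D. hh p)"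
proof -
  have "(\<Sum>p\<in>D. ff p) = (\<Sum>e\<in>E. \<Sum>p\<in>{p \<in> D. (\<lambda>(s, t). {s, t}) p = e}. ff p)"
    by (rule sum.group[symmetric]) (auto simp: finD finE, auto simp: D_def)
  also have "\<dots> = (\<Sum>e\<in>E. 2 * ff (SOME (s, t). e = {s, t}))"
  proof (rule sum.cong[OF refl])
    fix e assume "e \<in> E"
    then obtain a b where ab: "a \<noteq> b" "e = {a, b}" using Eform by blast
    have F: "{p \<in> D. (\<lambda>(s, t). {s, t}) p = e} = {(a,b),(b,a)}"
      using ab \<open>e \<in> E\<close> unfolding D_def by (auto simp: doubleton_eq_iff insert_commute)
    have sym: "ff (b, a) = ff (a, b)" unfolding ff_def by simp
    define P where "P = (\<lambda>(s::'a, t::'a). e = {s, t})"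
    have "P (a, b)" unfolding P_def ab by simp
    hence "P (SOME x. P x)" by (rule someI)
    moreover obtain s t where st: "(SOME x. P x) = (s, t)" by (cases "SOME x. P x") auto
    ultimately have "{s,t} = {a,b}" unfolding P_def ab by simp
    hence "(s,t) = (a,b) \<or> (s,t) = (b,a)" by (auto simp: doubleton_eq_iff)
    hence "ff (SOME x. P x) = ff (a,b)" using st sym by auto
    moreover have "(\<Sum>p\<in>{(a,b),(b,a)}. ff p) = 2 * ff (a,b)" using ab sym by simp
    ultimately show "(\<Sum>p\<in>{p \<in> D. (\<lambda>(s, t). {s, t}) p = e}. ff p) = 2 * ff (SOME (s, t). e = {s, t})"
      unfolding F P_def by simp
  qed
  finally have 1: "(\<Sum>p\<in>D. ff p) = 2 * (\<Sum>e\<in>E. ff (SOME (s, t). e = {s, t}))"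
    by (simp add: sum_distrib_left)
  have "(\<Sum>p\<in>D. ff p) = (\<Sum>p\<in>D. hh ((\<lambda>(s, t). (t, s)) p) + hh p)"
    by (rule sum.cong[OF refl]) (auto simp: ff_def hh_def)
  also have "\<dots> = (\<Sum>p\<in>D. hh ((\<lambda>(s, t). (t, s)) p)) + (\<Sum>p\<in>D. hh p)"
    by (simp add: sum.distrib)
  also have "(\<Sum>p\<in>D. hh ((\<lambda>(s, t). (t, s)) p)) = (\<Sum>p\<in>D. hh p)"
    by (rule reindex_inv) (auto simp: D_def insert_commute)
  finally show ?thesis using 1 by simp
qed

lemma main: "Lambda1 V E = (\<Sum>e\<in>E. ff (SOME (s, t). e = {s, t}))"
proof -
  have "8 * Lambda1 V E = 8 * (\<Sum>p\<in>D. hh p)" using partA partB partC by simp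
  hence "Lambda1 V E = (\<Sum>p\<in>D. hh p)" by linarith
  thus ?thesis using partD by linarith
qed

end

lemma sg_edge:
  assumes sg: "simple_graph V E" and e: "{x, y} \<in> E"
  shows "x \<in> V \<and> y \<in> V \<and> x \<noteq> y"
proof -
  obtain a b where ab: "a \<in> V" "b \<in> V" "a \<noteq> b" "{x, y} = {a, b}"
    using sg e unfolding simple_graph_def by blast
  hence "(x = a \<and> y = b) \<or> (x = b \<and> y = a)" by (simp only: doubleton_eq_iff)
  thus ?thesis using ab by blast
qed

lemma tree_tg:
  assumes "is_tree V E" shows "tg V E"
proof
  have sg: "simple_graph V E" and nc: "\<not> has_cycle E" using assms unfolding is_tree_def by auto
  show "finite V" using sg unfolding simple_graph_def by auto
  show "x \<in> V \<and> y \<in> V \<and> x \<noteq> y" if "{x, y} \<in> E" for x y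
    using sg_edge[OF sg that] .
  show "\<exists>x y. x \<noteq> y \<and> e = {x, y}" if "e \<in> E" for e
    using sg that unfolding simple_graph_def by blast
  show False if h: "{a, b} \<in> E" "{b, c} \<in> E" "{c, a} \<in> E" for a b c
  proof -
    have ne: "a \<noteq> b" "b \<noteq> c" "c \<noteq> a" using sg_edge[OF sg h(1)] sg_edge[OF sg h(2)] sg_edge[OF sg h(3)]
      by auto
    have walk: "is_walk E [a, b, c]" unfolding is_walk_def
    proof (intro conjI allI impI)
      fix i assume "i + 1 < length [a, b, c]"
      hence "i = 0 \<or> i = 1" by auto
      thus "{[a, b, c] ! i, [a, b, c] ! (i + 1)} \<in> E" by (elim disjE) (simp_all add: h)
    qed simp
    have "has_cycle E" unfolding has_cycle_def
      by (rule exI[of _ "[a, b, c]"]) (use ne walk h in auto)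
    thus False using nc by simp
  qed
qed

theorem corollary1:
  assumes "is_tree V E"
  shows "Lambda1 V E =
    (\<Sum>e\<in>E. (\<lambda>(s, t). (deg V E t - 1) * (xi V E s - deg V E t)
                          + (deg V E s - 1) * (xi V E t - deg V E s))
             (SOME (s, t). e = {s, t}))"
  using tg.main[OF tree_tg[OF assms]] unfolding tg.ff_def[OF tree_tg[OF assms]] .

end
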